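(* Let $r\ge 2$, $t$ and $s$ be positive integers with $\binom{8r^2}{r} \le s \le \beta_r \binom{t}{r}$, where $\beta_r := (12r)^{-r/(r-1)}$. Then \[ P_2(\mathcal{C}(s,r)) \le \tfrac{1}{2}\, P_2(\mathcal{L}(s,r,t)). \]
   Context: For a hypergraph $H$, $P_2(H)=\sum_x d(x)^2$ with $d(x)$ the number of edges containing $x$. The colex order on $r$-subsets of $\mathbb{N}$ is $A<B$ iff $\sum_{i\in A}2^i<\sum_{i\in B}2^i$, and $\mathcal{C}(s,r)$ is the family of the first $s$ $r$-subsets of $\mathbb{N}$ in colex order. The lex order on $[t]^{(r)}$ (the $r$-subsets of $\{1,\dots,t\}$) is $A<B$ iff $\min(A\triangle B)\in A$, and $\mathcal{L}(s,r,t)$ is the $r$-graph on $[t]$ consisting of the first $s$ sets of $[t]^{(r)}$ in lex order. *)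

theory Defs
  imports Complex_Main
begin

definition hdeg :: "'a set set \<Rightarrow> 'a \<Rightarrow> nat" where
  "hdeg H x = card {e \<in> H. x \<in> e}"

definition P2 :: "'a set set \<Rightarrow> nat" where
  "P2 H = (\<Sum>x\<in>\<Union>H. (hdeg H x)^2)"

definition colex_code :: "nat set \<Rightarrow> nat" where
  "colex_code A = (\<Sum>i\<in>A. 2^i)"

definition colex_less :: "nat set \<Rightarrow> nat set \<Rightarrow> bool" where
  "colex_less A B \<longleftrightarrow> colex_code A < colex_code B"

definition rsets :: "nat \<Rightarrow> nat set set" where
  "rsets r = {A. finite A \<and> card A = r}"

text \<open>C(s,r): the first s r-subsets of nat in colex order.\<close>
definition colex_initial :: "nat \<Rightarrow> nat \<Rightarrow> nat set set" where
  "colex_initial s r = {A \<in> rsets r. card {B \<in> rsets r. colex_less B A} < s}"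

definition lex_less :: "nat set \<Rightarrow> nat set \<Rightarrow> bool" where
  "lex_less A B \<longleftrightarrow> A \<noteq> B \<and> Min ((A - B) \<union> (B - A)) \<in> A"

definition rsets_of :: "nat \<Rightarrow> nat \<Rightarrow> nat set set" where
  "rsets_of r t = {A. A \<subseteq> {1..t} \<and> card A = r}"

text \<open>L(s,r,t): the first s sets of [t]^(r) in lex order.\<close>
definition lex_initial :: "nat \<Rightarrow> nat \<Rightarrow> nat \<Rightarrow> nat set set" where
  "lex_initial s r t = {A \<in> rsets_of r t. card {B \<in> rsets_of r t. lex_less B A} < s}"

definition beta :: "nat \<Rightarrow> real" where
  "beta r = (12 * real r) powr (- (real r / (real r - 1)))"

end

theory Submission
  imports Defs "HOL-Library.Nat_Bijection" "HOL-Analysis.Convex"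
begin

lemma rank_inj:
  assumes fin: "finite U"
  and irr: "\<And>a. a\<in>U \<Longrightarrow> \<not> rel a a"
  and tr: "\<And>a b c. a\<in>U \<Longrightarrow> b\<in>U \<Longrightarrow> c\<in>U \<Longrightarrow> rel a b \<Longrightarrow> rel b c \<Longrightarrow> rel a c"
  and tot: "\<And>a b. a\<in>U \<Longrightarrow> b\<in>U \<Longrightarrow> a \<noteq> b \<Longrightarrow> rel a b \<or> rel b a"
  shows "card {a\<in>U. card {b\<in>U. rel b a} < s} = min s (card U)"
proof -
  define rk where "rk a = card {b\<in>U. rel b a}" for a
  have lt: "rk a < rk c" if "a \<in> U" "c \<in> U" "rel a c" for a c
  proof -
    have "{b\<in>U. rel b a} \<subset> {b\<in>U. rel b c}"
      using that tr irr by blast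
    then show ?thesis unfolding rk_def by (intro psubset_card_mono) (use fin in auto)
  qed
  have inj: "inj_on rk U"
    by (rule inj_onI) (metis lt tot less_irrefl)
  have sub: "rk ` U \<subseteq> {..<card U}"
  proof
    fix y assume "y \<in> rk ` U"
    then obtain a where a: "a \<in> U" "y = rk a" by auto
    have "{b\<in>U. rel b a} \<subseteq> U - {a}" using irr a by auto
    then have "rk a \<le> card (U - {a})" unfolding rk_def by (intro card_mono) (use fin in auto)
    also have "\<dots> < card U"
    proof -
      have "card U > 0" using a fin card_gt_0_iff by blast
      then show ?thesis using a fin by (simp add: card_Diff_singleton)
    qed
    finally show "y \<in> {..<card U}" using a by auto
  qed
  have eq: "rk ` U = {..<card U}"
    using sub card_image[OF inj] by (intro card_subset_eq) auto
  have "{a\<in>U. rk a < s} = U \<inter> rk -` {..<s}" by auto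
  have "card {a\<in>U. rk a < s} = card (rk ` {a\<in>U. rk a < s})"
    by (rule card_image[symmetric]) (rule inj_on_subset[OF inj], auto)
  also have "rk ` {a\<in>U. rk a < s} = {..<card U} \<inter> {..<s}" using eq by auto
  also have "{..<card U} \<inter> {..<s} = {..<min s (card U)}" by auto
  also have "card \<dots> = min s (card U)" by simp
  finally show ?thesis unfolding rk_def .
qed

lemma sum_pow2_lt: "(\<Sum>i<m. (2::nat)^i) < 2^m"
  by (induction m) auto

lemma code_lt: "B \<subseteq> {..<m} \<Longrightarrow> (\<Sum>i\<in>B. (2::nat)^i) < 2^m"
  by (meson sum_mono2 finite_lessThan le_less_trans sum_pow2_lt zero_le)

lemma code_ge: "finite B \<Longrightarrow> i \<in> B \<Longrightarrow> (2::nat)^i \<le> (\<Sum>j\<in>B. 2^j)"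
  using member_le_sum[of i B "\<lambda>j. (2::nat)^j"] by auto

lemma cs_nat: "finite A \<Longrightarrow> (\<Sum>i\<in>A. real (f i))^2 \<le> real (card A) * (\<Sum>i\<in>A. real (f i)^2)"
  using Cauchy_Schwarz_ineq_sum[of "\<lambda>_. 1::real" "\<lambda>i. real (f i)" A] by simp

lemma double_count:
  assumes "finite H" "\<And>e. e \<in> H \<Longrightarrow> finite e" "finite V"
  shows "(\<Sum>x\<in>V. card {e\<in>H. x \<in> e}) = (\<Sum>e\<in>H. card (e \<inter> V))"
proof -
  have "(\<Sum>x\<in>V. card {e\<in>H. x \<in> e}) = (\<Sum>x\<in>V. \<Sum>e\<in>H. if x \<in> e then 1 else 0)"
    using assms by (auto simp: sum.If_cases intro!: sum.cong arg_cong[where f=card])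
  also have "\<dots> = (\<Sum>e\<in>H. \<Sum>x\<in>V. if x \<in> e then 1 else 0)" by (rule sum.swap)
  also have "\<dots> = (\<Sum>e\<in>H. card (e \<inter> V))"
    using assms by (simp add: sum.If_cases Int_commute)
  finally show ?thesis .
qed


lemma code_eq_enc: "colex_code A = set_encode A"
  by (simp add: colex_code_def set_encode_def)

lemma code_bound_sub: "finite B \<Longrightarrow> colex_code B < 2^m \<Longrightarrow> B \<subseteq> {..<m}"
proof
  fix j assume "finite B" "colex_code B < 2^m" "j \<in> B"
  then have "(2::nat)^j < 2^m" using code_ge[of B j] unfolding colex_code_def by linarith
  then show "j \<in> {..<m}" by simp
qed

lemma pred_finite: "finite {B\<in>rsets r. colex_less B A}"
proof (rule finite_subset)
  show "{B\<in>rsets r. colex_less B A} \<subseteq> Pow {..<colex_code A}"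
  proof
    fix B assume B: "B \<in> {B\<in>rsets r. colex_less B A}"
    then have "finite B" "colex_code B < colex_code A" by (auto simp: rsets_def colex_less_def)
    moreover have "colex_code A < 2 ^ colex_code A" by simp
    ultimately have "B \<subseteq> {..<colex_code A}" by (meson code_bound_sub order.strict_trans)
    then show "B \<in> Pow {..<colex_code A}" by simp
  qed
qed simp

lemma colex_sub:
  assumes "s \<le> m choose r" "A \<in> colex_initial s r"
  shows "A \<subseteq> {..<m}"
proof (rule ccontr)
  assume "\<not> A \<subseteq> {..<m}"
  then obtain i where i: "i \<in> A" "i \<ge> m" by (meson lessThan_iff not_le subsetI)
  have A: "finite A" "card A = r" "card {B\<in>rsets r. colex_less B A} < s"
    using assms(2) by (auto simp: colex_initial_def rsets_def)
  have "{B. B \<subseteq> {..<m} \<and> card B = r} \<subseteq> {B\<in>rsets r. colex_less B A}"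
  proof
    fix B assume B: "B \<in> {B. B \<subseteq> {..<m} \<and> card B = r}"
    have "colex_code B < 2^m" using B code_lt by (auto simp: colex_code_def)
    also have "(2::nat)^m \<le> 2^i" using i by simp
    also have "\<dots> \<le> colex_code A" using code_ge[OF A(1) i(1)] by (simp add: colex_code_def)
    finally show "B \<in> {B\<in>rsets r. colex_less B A}" using B
      by (auto simp: rsets_def colex_less_def intro: finite_subset)
  qed
  then have "card {B. B \<subseteq> {..<m} \<and> card B = r} \<le> card {B\<in>rsets r. colex_less B A}"
    by (intro card_mono pred_finite)
  then have "m choose r < s" using A(3) n_subsets[of "{..<m}" r] by simp
  then show False using assms(1) by simp
qed

lemma colex_card:
  assumes "s \<le> m choose r"
  shows "card (colex_initial s r) \<le> s"
proof -
  define Rm where "Rm = {B. B \<subseteq> {..<m} \<and> card B = r}"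
  have finRm: "finite Rm" unfolding Rm_def by (rule finite_subset[of _ "Pow {..<m}"]) auto
  have pe: "{B\<in>rsets r. colex_less B A} = {B\<in>Rm. colex_less B A}" if "A \<in> Rm" for A
  proof -
    have "colex_code A < 2^m" using that code_lt by (auto simp: Rm_def colex_code_def)
    then have "B \<subseteq> {..<m}" if "finite B" "colex_code B < colex_code A" for B
      using code_bound_sub that by (meson order.strict_trans)
    then show ?thesis using that
      by (auto simp: Rm_def rsets_def colex_less_def intro: finite_subset)
  qed
  have "colex_initial s r = {A\<in>Rm. card {B\<in>Rm. colex_less B A} < s}"
  proof
    show "colex_initial s r \<subseteq> {A\<in>Rm. card {B\<in>Rm. colex_less B A} < s}"
    proof
      fix A assume A: "A \<in> colex_initial s r"
      then have "A \<in> Rm" using colex_sub[OF assms A] by (auto simp: Rm_def colex_initial_def rsets_def)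
      then show "A \<in> {A\<in>Rm. card {B\<in>Rm. colex_less B A} < s}" using A pe
        by (auto simp: colex_initial_def)
    qed
    show "{A\<in>Rm. card {B\<in>Rm. colex_less B A} < s} \<subseteq> colex_initial s r"
      using pe by (auto simp: colex_initial_def Rm_def rsets_def intro: finite_subset)
  qed
  also have "card \<dots> = min s (card Rm)"
  proof (rule rank_inj[OF finRm])
    fix a b assume "a \<in> Rm" "b \<in> Rm" "a \<noteq> b"
    then have "set_encode a \<noteq> set_encode b" using set_encode_eq[of a b]
      by (auto simp: Rm_def intro: finite_subset)
    then show "colex_less a b \<or> colex_less b a" by (auto simp: colex_less_def code_eq_enc)
  qed (auto simp: colex_less_def)
  finally show ?thesis by simp
qed

lemma deg_count:
  assumes "finite V" "x \<in> V" "r \<ge> 1"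
  shows "card {e. e \<subseteq> V \<and> card e = r \<and> x \<in> e} = (card V - 1) choose (r - 1)"
proof -
  have "{e. e \<subseteq> V \<and> card e = r \<and> x \<in> e} = insert x ` {B. B \<subseteq> V - {x} \<and> card B = r - 1}"
  proof
    show "{e. e \<subseteq> V \<and> card e = r \<and> x \<in> e} \<subseteq> insert x ` {B. B \<subseteq> V - {x} \<and> card B = r - 1}"
    proof
      fix e assume e: "e \<in> {e. e \<subseteq> V \<and> card e = r \<and> x \<in> e}"
      then have "finite e" using assms(1) finite_subset by blast
      then have "e = insert x (e - {x})" "e - {x} \<subseteq> V - {x}" "card (e - {x}) = r - 1"
        using e by auto
      then show "e \<in> insert x ` {B. B \<subseteq> V - {x} \<and> card B = r - 1}" by blast
    qed
    show "insert x ` {B. B \<subseteq> V - {x} \<and> card B = r - 1} \<subseteq> {e. e \<subseteq> V \<and> card e = r \<and> x \<in> e}"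
    proof
      fix e assume "e \<in> insert x ` {B. B \<subseteq> V - {x} \<and> card B = r - 1}"
      then obtain B where B: "e = insert x B" "B \<subseteq> V - {x}" "card B = r - 1" by auto
      then have "finite B" using assms(1) finite_subset by blast
      moreover have "x \<notin> B" using B by auto
      ultimately show "e \<in> {e. e \<subseteq> V \<and> card e = r \<and> x \<in> e}" using B assms by auto
    qed
  qed
  moreover have "inj_on (insert x) {B. B \<subseteq> V - {x} \<and> card B = r - 1}"
    by (rule inj_onI) (metis Diff_insert_absorb DiffE insertI1 mem_Collect_eq subsetD)
  ultimately show ?thesis using n_subsets[of "V - {x}" "r - 1"] assms
    by (simp add: card_image)
qed

lemma P2_upper:
  assumes "finite H" "\<And>e. e \<in> H \<Longrightarrow> finite e \<and> card e = r"
    and "\<And>x. x \<in> \<Union>H \<Longrightarrow> hdeg H x \<le> D"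
  shows "P2 H \<le> D * (r * card H)"
proof -
  have fU: "finite (\<Union>H)" using assms by auto
  have "P2 H \<le> (\<Sum>x\<in>\<Union>H. D * hdeg H x)"
    unfolding P2_def power2_eq_square by (intro sum_mono mult_right_mono) (use assms in auto)
  also have "\<dots> = D * (\<Sum>x\<in>\<Union>H. card {e\<in>H. x \<in> e})" by (simp add: sum_distrib_left hdeg_def)
  also have "(\<Sum>x\<in>\<Union>H. card {e\<in>H. x \<in> e}) = (\<Sum>e\<in>H. card (e \<inter> \<Union>H))"
    using assms by (intro double_count) auto
  also have "\<dots> = (\<Sum>e\<in>H. r)" using assms by (intro sum.cong) (auto simp: Int_absorb2 Union_upper)
  finally show ?thesis by (simp add: mult.commute)
qed

lemma P2_lower:
  assumes "finite H" "\<And>e. e \<in> H \<Longrightarrow> finite e" "\<And>e. e \<in> H \<Longrightarrow> e \<inter> K \<noteq> {}" "finite K"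
  shows "real (card H)^2 \<le> real (card K) * real (P2 H)"
proof -
  have fU: "finite (\<Union>H)" using assms by auto
  have "card H = (\<Sum>e\<in>H. 1)" by simp
  also have "\<dots> \<le> (\<Sum>e\<in>H. card (e \<inter> K))"
    using assms by (intro sum_mono) (simp add: Suc_leI card_gt_0_iff)
  also have "\<dots> = (\<Sum>x\<in>K. hdeg H x)" unfolding hdeg_def using assms by (intro double_count[symmetric])
  finally have s1: "real (card H) \<le> (\<Sum>x\<in>K. real (hdeg H x))" by (metis of_nat_le_iff of_nat_sum)
  have "real (card H)^2 \<le> (\<Sum>x\<in>K. real (hdeg H x))^2" using s1 by (intro power_mono) auto
  also have "\<dots> \<le> real (card K) * (\<Sum>x\<in>K. real (hdeg H x)^2)" by (rule cs_nat[OF assms(4)])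
  also have "(\<Sum>x\<in>K. real (hdeg H x)^2) \<le> real (P2 H)"
  proof -
    have "(\<Sum>x\<in>K. real (hdeg H x)^2) = (\<Sum>x\<in>K \<inter> \<Union>H. real (hdeg H x)^2)"
    proof (rule sum.mono_neutral_right[OF assms(4)])
      show "\<forall>i\<in>K - K \<inter> \<Union>H. real (hdeg H i)^2 = 0"
      proof
        fix i assume "i \<in> K - K \<inter> \<Union>H"
        then have "{e\<in>H. i \<in> e} = {}" by auto
        then have "hdeg H i = 0" unfolding hdeg_def by (simp only: card.empty)
        then show "real (hdeg H i)^2 = 0" by simp
      qed
    qed auto
    also have "\<dots> \<le> (\<Sum>x\<in>\<Union>H. real (hdeg H x)^2)"
      by (rule sum_mono2[OF fU]) auto
    also have "\<dots> = real (P2 H)" by (simp add: P2_def)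
    finally show ?thesis .
  qed
  then have "real (card K) * (\<Sum>x\<in>K. real (hdeg H x)^2) \<le> real (card K) * real (P2 H)"
    by (intro mult_left_mono) auto
  finally show ?thesis .
qed


lemma binom_prod: "real (n choose k) = (\<Prod>i<k. (real n - real i)) / fact k"
  by (simp add: binomial_gbinomial gbinomial_prod_rev atLeast0LessThan)

lemma binom_L1:
  assumes "a \<le> b"
  shows "real (a choose k) * real b ^ k \<le> real (b choose k) * real a ^ k"
proof (cases "k \<le> a")
  case False
  then have z: "real (a choose k) * real b ^ k = 0" by simp
  have "0 \<le> real (b choose k) * real a ^ k" by simp
  then show ?thesis using z by linarith
next
  case True
  have "(\<Prod>i<k. (real a - real i) * real b) \<le> (\<Prod>i<k. (real b - real i) * real a)"
  proof (rule prod_mono)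
    fix i assume "i \<in> {..<k}"
    then have "real i \<le> real a" "real a \<le> real b" using True assms by auto
    moreover have "real i * real a \<le> real i * real b" using assms by (intro mult_left_mono) auto
    moreover have "real i * real b \<le> real a * real b" using \<open>real i \<le> real a\<close> by (intro mult_right_mono) auto
    ultimately show "0 \<le> (real a - real i) * real b \<and> (real a - real i) * real b \<le> (real b - real i) * real a"
      by (simp add: algebra_simps)
  qed
  then have "(\<Prod>i<k. (real a - real i)) * real b ^ k \<le> (\<Prod>i<k. (real b - real i)) * real a ^ k"
    by (simp add: prod.distrib)
  then have "(\<Prod>i<k. (real a - real i)) / fact k * real b ^ k \<le> (\<Prod>i<k. (real b - real i)) / fact k * real a ^ k"
    by (simp add: divide_right_mono mult.commute times_divide_eq_right)
  then show ?thesis by (simp add: binom_prod)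
qed

lemma binom_L2:
  assumes "k \<le> a" "a \<le> b"
  shows "real (b choose k) * (real a - real k) ^ k \<le> real (a choose k) * real b ^ k"
proof -
  have "(\<Prod>i<k. (real b - real i) * (real a - real k)) \<le> (\<Prod>i<k. (real a - real i) * real b)"
  proof (rule prod_mono)
    fix i assume "i \<in> {..<k}"
    then have h: "real i \<le> real k" "real k \<le> real a" "real a \<le> real b" using assms by auto
    have "(real b - real i) * (real a - real k) \<le> (real a - real i) * real b"
    proof -
      have "0 \<le> (real k - real i) * real b + real i * (real a - real k)" using h by simp
      then show ?thesis by (simp add: algebra_simps)
    qed
    then show "0 \<le> (real b - real i) * (real a - real k) \<and> (real b - real i) * (real a - real k) \<le> (real a - real i) * real b"
      using h by simp
  qed
  then have "(\<Prod>i<k. (real b - real i)) * (real a - real k) ^ k \<le> (\<Prod>i<k. (real a - real i)) * real b ^ k"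
    by (simp add: prod.distrib)
  then have "(\<Prod>i<k. (real b - real i)) / fact k * (real a - real k) ^ k \<le> (\<Prod>i<k. (real a - real i)) / fact k * real b ^ k"
    by (simp add: divide_right_mono mult.commute times_divide_eq_right)
  then show ?thesis by (simp add: binom_prod)
qed

definition lexw :: "nat set \<Rightarrow> nat set \<Rightarrow> bool" where
  "lexw A B \<longleftrightarrow> (\<exists>j. j \<in> A \<and> j \<notin> B \<and> (\<forall>i<j. i \<in> A \<longleftrightarrow> i \<in> B))"

lemma lex_char:
  assumes "finite A" "finite B"
  shows "lex_less A B \<longleftrightarrow> lexw A B"
proof
  assume l: "lex_less A B"
  define D where "D = (A - B) \<union> (B - A)"
  have D: "finite D" "D \<noteq> {}" "Min D \<in> A" using l assms by (auto simp: D_def lex_less_def)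
  have "Min D \<in> D" using D Min_in by blast
  then have "Min D \<notin> B" using D(3) by (auto simp: D_def)
  moreover have "\<forall>i<Min D. i \<in> A \<longleftrightarrow> i \<in> B"
  proof (intro allI impI)
    fix i assume "i < Min D"
    then have "i \<notin> D" using D(1) Min_le not_le by blast
    then show "i \<in> A \<longleftrightarrow> i \<in> B" by (auto simp: D_def)
  qed
  ultimately show "lexw A B" using D(3) unfolding lexw_def by blast
next
  assume "lexw A B"
  then obtain j where j: "j \<in> A" "j \<notin> B" "\<forall>i<j. i \<in> A \<longleftrightarrow> i \<in> B" by (auto simp: lexw_def)
  define D where "D = (A - B) \<union> (B - A)"
  have fD: "finite D" using assms by (simp add: D_def)
  have jD: "j \<in> D" using j by (simp add: D_def)
  have "Min D = j"
  proof (rule antisym)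
    show "Min D \<le> j" using fD jD by simp
    have "Min D \<in> D" using fD jD Min_in by blast
    then show "j \<le> Min D" using j(3) by (auto simp: D_def not_le[symmetric])
  qed
  then show "lex_less A B" using j by (auto simp: lex_less_def D_def)
qed

lemma lexw_trans: "lexw A B \<Longrightarrow> lexw B C \<Longrightarrow> lexw A C"
  unfolding lexw_def
proof (elim exE conjE)
  fix j1 j2
  assume a: "j1 \<in> A" "j1 \<notin> B" "\<forall>i<j1. i \<in> A \<longleftrightarrow> i \<in> B"
     and b: "j2 \<in> B" "j2 \<notin> C" "\<forall>i<j2. i \<in> B \<longleftrightarrow> i \<in> C"
  consider "j1 < j2" | "j2 < j1" | "j1 = j2" by linarith
  then show "\<exists>j. j \<in> A \<and> j \<notin> C \<and> (\<forall>i<j. i \<in> A \<longleftrightarrow> i \<in> C)"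
  proof cases
    case 1
    have "j1 \<notin> C" using a(2) b(3) 1 by blast
    moreover have "\<forall>i<j1. i \<in> A \<longleftrightarrow> i \<in> C" using a(3) b(3) 1 by (meson order.strict_trans)
    ultimately show ?thesis using a(1) by blast
  next
    case 2
    have "j2 \<in> A" using a(3) b(1) 2 by blast
    moreover have "\<forall>i<j2. i \<in> A \<longleftrightarrow> i \<in> C" using a(3) b(3) 2 by (meson order.strict_trans)
    ultimately show ?thesis using b(2) by blast
  next
    case 3 then show ?thesis using a(2) b(1) by simp
  qed
qed

lemma rsets_of_finite: "finite (rsets_of r t)"
  by (rule finite_subset[of _ "Pow {1..t}"]) (auto simp: rsets_of_def)

lemma rsets_of_card: "card (rsets_of r t) = t choose r"
  using n_subsets[of "{1..t}" r] by (simp add: rsets_of_def)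

lemma lex_card:
  assumes "s \<le> t choose r"
  shows "card (lex_initial s r t) = s"
proof -
  have fe: "finite A" if "A \<in> rsets_of r t" for A
    using that by (auto simp: rsets_of_def intro: finite_subset)
  have "card (lex_initial s r t) = min s (card (rsets_of r t))"
    unfolding lex_initial_def
  proof (rule rank_inj[OF rsets_of_finite])
    fix a b c assume "a \<in> rsets_of r t" "b \<in> rsets_of r t" "c \<in> rsets_of r t"
      "lex_less a b" "lex_less b c"
    then show "lex_less a c" using fe lex_char lexw_trans by metis
  next
    fix a b assume ab: "a \<in> rsets_of r t" "b \<in> rsets_of r t" "a \<noteq> b"
    define D where "D = (a - b) \<union> (b - a)"
    have "finite D" "D \<noteq> {}" using ab fe by (auto simp: D_def)
    then have "Min D \<in> D" by simp
    moreover have "(b - a) \<union> (a - b) = D" by (auto simp: D_def)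
    ultimately show "lex_less a b \<or> lex_less b a" using ab by (auto simp: lex_less_def D_def)
  qed (auto simp: lex_less_def)
  then show ?thesis using assms rsets_of_card by simp
qed

lemma lex_meets:
  assumes "s \<le> k * ((t - k) choose (r - 1))" "1 \<le> r" "k \<le> t" "A \<in> lex_initial s r t"
  shows "A \<inter> {1..k} \<noteq> {}"
proof
  assume dis: "A \<inter> {1..k} = {}"
  have A: "A \<subseteq> {1..t}" "card A = r" "card {B\<in>rsets_of r t. lex_less B A} < s"
    using assms(4) by (auto simp: lex_initial_def rsets_of_def)
  have fA: "finite A" using A(1) finite_subset by blast
  define CC where "CC = {C. C \<subseteq> {k+1..t} \<and> card C = r - 1}"
  define T where "T = (\<lambda>(i,C). insert i C) ` ({1..k} \<times> CC)"
  have inj: "inj_on (\<lambda>(i,C). insert i C) ({1..k} \<times> CC)"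
  proof (rule inj_onI)
    fix p q assume h0: "p \<in> {1..k} \<times> CC" "q \<in> {1..k} \<times> CC" "(\<lambda>(i,C). insert i C) p = (\<lambda>(i,C). insert i C) q"
    obtain i C where p: "p = (i, C)" by (cases p)
    obtain i' C' where q: "q = (i', C')" by (cases q)
    have h: "(i, C) \<in> {1..k} \<times> CC" "(i', C') \<in> {1..k} \<times> CC" "insert i C = insert i' C'"
      using h0 p q by auto
    have nC: "i \<notin> C" "i' \<notin> C'" "i \<notin> C'" "i' \<notin> C" using h(1,2) by (auto simp: CC_def)
    then have "i = i'" using h(3) by blast
    moreover have "C = C'" using h(3) nC by (metis Diff_insert_absorb \<open>i = i'\<close>)
    ultimately show "p = q" using p q by simp
  qed
  have cT: "card T = k * ((t - k) choose (r - 1))"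
    unfolding T_def using inj by (simp add: card_image card_cartesian_product CC_def n_subsets)
  have "T \<subseteq> {B\<in>rsets_of r t. lex_less B A}"
  proof
    fix B assume "B \<in> T"
    then obtain i C where iC: "i \<in> {1..k}" "C \<in> CC" "B = insert i C" by (auto simp: T_def)
    have fC: "finite C" using iC(2) by (auto simp: CC_def intro: finite_subset)
    have iC': "i \<notin> C" using iC by (auto simp: CC_def)
    have "B \<in> rsets_of r t" using iC fC iC' assms(2,3) by (auto simp: rsets_of_def CC_def)
    moreover have "lexw B A"
      unfolding lexw_def
    proof (intro exI conjI allI impI)
      show "i \<in> B" using iC by simp
      show "i \<notin> A" using iC dis by auto
      fix j assume "j < i"
      then have "j \<notin> B" using iC by (auto simp: CC_def)
      moreover have "j \<notin> A"
      proof
        assume "j \<in> A"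
        then have "j \<in> {1..k}" using A(1) \<open>j < i\<close> iC(1) by auto
        then show False using dis \<open>j \<in> A\<close> by blast
      qed
      ultimately show "j \<in> B \<longleftrightarrow> j \<in> A" by simp
    qed
    then have "lex_less B A" using lex_char fA fC iC(3) by auto
    ultimately show "B \<in> {B\<in>rsets_of r t. lex_less B A}" by simp
  qed
  then have "card T \<le> card {B\<in>rsets_of r t. lex_less B A}"
    by (intro card_mono) (auto intro: finite_subset[OF _ rsets_of_finite])
  then show False using A(3) cT assms(1) by simp
qed


lemma beta_facts:
  assumes "r \<ge> 2"
  shows "beta r > 0" "beta r ^ (r - 1) = (1 / (12 * real r)) ^ r"
proof -
  have pos: "12 * real r > 0" using assms by simp
  show "beta r > 0" unfolding beta_def using pos by simp
  have r1: "real (r - 1) = real r - 1" using assms by simp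
  have ne: "real r - 1 \<noteq> 0" using assms by simp
  have "beta r ^ (r - 1) = beta r powr real (r - 1)"
    using \<open>beta r > 0\<close> by (simp add: powr_realpow)
  also have "\<dots> = (12 * real r) powr (- (real r / (real r - 1)) * real (r - 1))"
    unfolding beta_def by (simp add: powr_powr)
  also have "- (real r / (real r - 1)) * real (r - 1) = - real r" using r1 ne by simp
  also have "(12 * real r) powr (- real r) = 1 / (12 * real r) ^ r"
    using pos by (simp add: powr_minus_divide powr_realpow)
  also have "\<dots> = (1 / (12 * real r)) ^ r" by (simp add: power_one_over)
  finally show "beta r ^ (r - 1) = (1 / (12 * real r)) ^ r" .
qed

lemma quant:
  fixes r t s m :: nat
  assumes r2: "r \<ge> 2" and sm: "s \<le> m choose r" and sM: "(m - 1) choose r < s"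
    and m8: "8 * r^2 \<le> m" and mt: "m \<le> t" and sb: "real s \<le> beta r * real (t choose r)"
    and kdef: "k = (m - r) div (2 * r^2)"
  shows "2 * r^2 * k \<le> m - r" "k \<le> t" "s \<le> k * ((t - k) choose (r - 1))"
proof -
  define M where "M = m - 1"
  define R where "R = real r"
  have R2: "R \<ge> 2" using r2 by (simp add: R_def)
  have r2sq: "4 \<le> r^2" using r2 mult_le_mono[of 2 r 2 r] by (simp add: power2_eq_square)
  have rsq: "r \<le> r^2" by (simp add: power2_eq_square)
  have rM: "r \<le> M" using m8 r2sq rsq unfolding M_def by linarith

  have Mm: "real M = real m - 1" "M < m" using m8 r2sq unfolding M_def by auto
  have Mt: "M \<le> t" using mt Mm by simp
  have s0: "s > 0" using sM by simp
  have bpos: "beta r > 0" and bpow: "beta r ^ (r - 1) = (1 / (12 * R)) ^ r"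
    using beta_facts[OF r2] by (auto simp: R_def)
  have tpos: "real (t choose r) > 0"
  proof -
    have "0 < real s" using s0 by simp
    also have "\<dots> \<le> beta r * real (t choose r)" by (rule sb)
    finally show ?thesis using bpos by (simp add: zero_less_mult_iff)
  qed
  have t0: "t > 0" using Mt rM r2 by simp
  have L2: "real (t choose r) * (real M - real r) ^ r \<le> real (M choose r) * real t ^ r"
    by (rule binom_L2[OF rM Mt])
  have "real (M choose r) * real t ^ r < real s * real t ^ r"
    using sM t0 unfolding M_def by (intro mult_strict_right_mono) auto
  also have "\<dots> \<le> beta r * real (t choose r) * real t ^ r"
    using sb by (intro mult_right_mono) auto
  finally have "real (t choose r) * (real M - real r) ^ r < real (t choose r) * (beta r * real t ^ r)"
    using L2 by (simp add: mult_ac)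
  then have xr0: "(real M - real r) ^ r < beta r * real t ^ r"
    using tpos by (simp add: mult_less_cancel_left_pos)
  define x where "x = (real M - R) / real t"
  have x0: "x \<ge> 0" using rM by (simp add: x_def R_def)
  have xr: "x ^ r < beta r"
    using xr0 t0 by (simp add: x_def R_def power_divide pos_divide_less_eq)
  have "(x ^ (r - 1)) ^ r = (x ^ r) ^ (r - 1)" by (simp add: power_mult[symmetric] mult.commute)
  also have "\<dots> < beta r ^ (r - 1)"
    using xr x0 r2 by (intro power_strict_mono) auto
  also have "\<dots> = (1 / (12 * R)) ^ r" by (rule bpow)
  finally have xr1: "x ^ (r - 1) < 1 / (12 * R)"
    by (rule power_less_imp_less_base) (use R2 in simp)
  have x1: "x < 1"
  proof (rule ccontr)
    assume "\<not> x < 1"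
    then have "1 \<le> x ^ (r - 1)" by (simp add: one_le_power)
    moreover have "1 / (12 * R) \<le> 1" using R2 by simp
    ultimately show False using xr1 by linarith
  qed
  have Mrt: "real m - R \<le> real t"
  proof -
    have "real M - R < real t" using x1 t0 by (simp add: x_def divide_less_eq)
    then have "M - r < t" unfolding R_def using rM by linarith
    then have "m - r \<le> t" using Mm rM unfolding M_def by linarith
    then show ?thesis unfolding R_def using rM Mm by linarith
  qed
  define d where "d = 2 * r^2"
  have d0: "d > 0" using r2 by (simp add: d_def)
  have k1: "k * d \<le> m - r" unfolding kdef by (simp add: d_def)
  have k2: "m - r < (k + 1) * d"
  proof -
    have "m - r = (m - r) div d * d + (m - r) mod d" by simp
    moreover have "(m - r) mod d < d" using d0 by simp
    ultimately show ?thesis unfolding kdef d_def by (simp add: algebra_simps)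
  qed
  show kA: "2 * r^2 * k \<le> m - r" using k1 by (simp add: d_def mult.commute)
  have k2ge: "2 \<le> k"
  proof -
    have "2 * d \<le> m - r" using m8 rsq unfolding d_def by linarith
    then have "2 \<le> (m - r) div d" using d0 by (simp add: less_eq_div_iff_mult_less_eq)
    then show ?thesis unfolding kdef d_def .
  qed
  have kB: "2 * R^2 * real k \<le> real m - R"
  proof -
    have "real (2 * r^2 * k) \<le> real (m - r)" using kA by (simp only: of_nat_le_iff)
    then show ?thesis using rM Mm unfolding R_def by simp
  qed
  have kC: "real m \<le> 4 * R^2 * real k"
  proof -
    have a: "m - r < 2*r^2 + 2*(k*r^2)" using k2 unfolding d_def by (simp add: algebra_simps)
    have b: "2*r^2 \<le> k*r^2" using k2ge by (simp add: mult_le_mono1)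
    have c: "r \<le> k*r^2" using b rsq by linarith
    have "m \<le> 4*(k*r^2)" using a b c rM Mm by linarith
    then have "m \<le> 4 * r^2 * k" by (simp add: mult_ac)
    then have "real m \<le> real (4 * r^2 * k)" by (simp only: of_nat_le_iff)
    then show ?thesis by (simp add: R_def)
  qed
  have RR: "2 * R \<le> R^2" using R2 mult_right_mono[of 2 R R] by (simp add: power2_eq_square)
  have tk: "(2 * R + 1) * real k \<le> real t"
  proof -
    have "2 * R + 1 \<le> 2 * R^2" using RR R2 by linarith
    then have "(2 * R + 1) * real k \<le> 2 * R^2 * real k" by (intro mult_right_mono) auto
    then show ?thesis using kB Mrt by linarith
  qed
  have k0: "real k > 0" using k2ge by simp
  have kk: "real k + 2 * R * real k = (2 * R + 1) * real k" by (simp add: algebra_simps)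
  have kk2: "0 < 2 * R * real k" using k0 R2 by simp
  have tkpos: "real t - real k > 0" using tk kk kk2 by linarith
  show "k \<le> t" using tkpos by simp
  have ktr: "real (t - k) = real t - real k" using \<open>k \<le> t\<close> by simp
  define c1 where "c1 = real M / (real M - R)"
  define c2 where "c2 = real t / (real t - real k)"
  have MR: "real M - R \<ge> 4 * R^2"
  proof -
    have "real (8 * r^2) \<le> real m" using m8 by (simp only: of_nat_le_iff)
    then have "8 * R^2 \<le> real m" by (simp add: R_def)
    moreover have "R + 1 \<le> 4 * R^2" using RR R2 by linarith
    ultimately show ?thesis using Mm by linarith
  qed
  have MRpos: "real M - R > 0" using MR RR R2 by linarith
  have c1b: "c1 \<le> 1 + 1 / (4 * R)"
  proof -
    have "4 * R * real M \<le> (4 * R + 1) * (real M - R)"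
      using MR by (simp add: algebra_simps power2_eq_square)
    then show ?thesis unfolding c1_def using MRpos R2
      by (simp add: divide_le_eq field_simps)
  qed
  have c2b: "c2 \<le> 1 + 1 / (2 * R)"
  proof -
    have "2 * R * real t \<le> (2 * R + 1) * (real t - real k)"
      using tk by (simp add: algebra_simps)
    then show ?thesis unfolding c2_def using tkpos R2
      by (simp add: divide_le_eq field_simps)
  qed
  have c10: "c1 \<ge> 0" "c2 \<ge> 0" using MRpos tkpos by (auto simp: c1_def c2_def)
  define c where "c = c1 * c2"
  have cb: "c \<le> 1 + 1 / R"
  proof -
    have "c \<le> (1 + 1 / (4 * R)) * (1 + 1 / (2 * R))"
      unfolding c_def using c1b c2b c10 by (intro mult_mono) auto
    also have "\<dots> = 1 + 3 / (4 * R) + 1 / (8 * R^2)" using R2 by (simp add: field_simps power2_eq_square)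
    also have "\<dots> \<le> 1 + 1 / R" using R2 by (simp add: field_simps power2_eq_square)
    finally show ?thesis .
  qed
  have c0: "c \<ge> 0" using c10 by (simp add: c_def)
  have cpow: "c ^ (r - 1) \<le> 3"
  proof -
    have "c \<le> exp (1 / R)" using cb exp_ge_add_one_self[of "1/R"] by linarith
    then have "c ^ (r - 1) \<le> exp (1 / R) ^ (r - 1)" using c0 by (intro power_mono) auto
    also have "\<dots> = exp (real (r - 1) * (1 / R))" by (rule exp_of_nat_mult[symmetric])
    also have "\<dots> \<le> exp 1"
    proof -
      have "real (r - 1) = R - 1" using r2 by (simp add: R_def)
      then have "real (r - 1) * (1 / R) \<le> 1" using R2 by (simp add: field_simps)
      then show ?thesis by (simp only: exp_le_cancel_iff)
    qed
    also have "\<dots> \<le> 3" by (rule exp_le)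
    finally show ?thesis .
  qed
  define y where "y = real M / (real t - real k)"
  have yc: "y = c * x" using MRpos tkpos t0
    by (simp add: y_def c_def c1_def c2_def x_def)
  have y0: "y \<ge> 0" using tkpos by (simp add: y_def)
  have ypow: "y ^ (r - 1) < 1 / (4 * R)"
  proof -
    have "y ^ (r - 1) = c ^ (r - 1) * x ^ (r - 1)" by (simp add: yc power_mult_distrib)
    also have "\<dots> \<le> 3 * x ^ (r - 1)" using cpow x0 by (intro mult_right_mono) auto
    also have "\<dots> < 3 * (1 / (12 * R))" using xr1 by simp
    also have "\<dots> = 1 / (4 * R)" by simp
    finally show ?thesis .
  qed
  have y1: "y < 1"
  proof (rule ccontr)
    assume "\<not> y < 1"
    then have "1 \<le> y ^ (r - 1)" by (simp add: one_le_power)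
    moreover have "1 / (4 * R) \<le> 1" using R2 by simp
    ultimately show False using ypow by linarith
  qed
  have Mtk: "M \<le> t - k"
  proof -
    have "real M < real t - real k" using y1 tkpos by (simp add: y_def divide_less_eq)
    then show ?thesis using ktr by linarith
  qed
  have L1: "real (M choose (r - 1)) * real (t - k) ^ (r - 1) \<le> real ((t - k) choose (r - 1)) * real M ^ (r - 1)"
    by (rule binom_L1[OF Mtk])
  have absr: "r * (m choose r) = m * (M choose (r - 1))"
    using binomial_absorption[of "r - 1" m] r2 unfolding M_def by simp
  have Tpos: "real (t - k) ^ (r - 1) > 0" using tkpos ktr by simp
  have mid: "real (M choose (r - 1)) \<le> real ((t - k) choose (r - 1)) * y ^ (r - 1)"
  proof -
    have "real (M choose (r - 1)) \<le> real ((t - k) choose (r - 1)) * real M ^ (r - 1) / real (t - k) ^ (r - 1)"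
      using L1 Tpos by (simp add: le_divide_eq)
    then show ?thesis by (simp add: y_def ktr power_divide)
  qed
  have "R * real s \<le> R * real (m choose r)" using sm R2 by simp
  also have "\<dots> = real m * real (M choose (r - 1))"
    using arg_cong[OF absr, of real] by (simp add: R_def)
  also have "\<dots> \<le> real m * (real ((t - k) choose (r - 1)) * y ^ (r - 1))"
    using mid by (intro mult_left_mono) auto
  also have "\<dots> \<le> real m * (real ((t - k) choose (r - 1)) * (1 / (4 * R)))"
    using ypow by (intro mult_left_mono) auto
  also have "\<dots> = real ((t - k) choose (r - 1)) * (real m / (4 * R))" by simp
  also have "\<dots> \<le> real ((t - k) choose (r - 1)) * (R * real k)"
  proof (intro mult_left_mono)
    show "real m / (4 * R) \<le> R * real k" using kC R2 by (simp add: divide_le_eq power2_eq_square mult_ac)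
  qed auto
  finally have "R * real s \<le> R * (real k * real ((t - k) choose (r - 1)))" by (simp add: mult_ac)
  then have "real s \<le> real (k * ((t - k) choose (r - 1)))" using R2 by simp
  then show "s \<le> k * ((t - k) choose (r - 1))" by (simp only: of_nat_le_iff)
qed


lemma binom_id: "m > 0 \<Longrightarrow> r \<ge> 1 \<Longrightarrow> (m - r) * ((m - 1) choose (r - 1)) = r * ((m - 1) choose r)"
proof -
  assume m: "m > 0" and r: "r \<ge> 1"
  have a: "r * (m choose r) = m * ((m - 1) choose (r - 1))"
    using binomial_absorption[of "r - 1" m] r by simp
  have b: "(m - r) * (m choose r) = m * ((m - 1) choose r)" by (rule binomial_absorb_comp)
  have "m * ((m - r) * ((m - 1) choose (r - 1))) = (m - r) * (r * (m choose r))"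
    using a by (simp add: mult_ac)
  also have "\<dots> = m * (r * ((m - 1) choose r))" using b by (simp add: mult_ac)
  finally show ?thesis using m by simp
qed

theorem proposition6p3:
  fixes r t s :: nat
  assumes "r \<ge> 2" and "t > 0" and "s > 0"
    and "(8 * r^2) choose r \<le> s"
    and "real s \<le> beta r * real (t choose r)"
  shows "real (P2 (colex_initial s r)) \<le> real (P2 (lex_initial s r t)) / 2"
proof -
  note r2 = assms(1) and s0 = assms(3) and s8 = assms(4) and sb = assms(5)
  have bpos: "beta r > 0" and bpow: "beta r ^ (r - 1) = (1 / (12 * real r)) ^ r"
    using beta_facts[OF r2] by auto
  have b1: "beta r \<le> 1"
  proof (rule ccontr)
    assume "\<not> beta r \<le> 1"
    then have "1 < beta r ^ (r - 1)" using r2 by (intro one_less_power) auto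
    moreover have "(1 / (12 * real r)) ^ r \<le> 1" using r2 by (intro power_le_one) auto
    ultimately show False using bpow by simp
  qed
  have st: "s \<le> t choose r"
  proof -
    have "real s \<le> beta r * real (t choose r)" by (rule sb)
    also have "\<dots> \<le> real (t choose r)" using b1 bpos by (intro mult_left_le_one_le) auto
    finally show ?thesis by simp
  qed
  define m where "m = (LEAST m. s \<le> m choose r)"
  have sm: "s \<le> m choose r" unfolding m_def by (rule LeastI[of _ t]) (rule st)
  have mt: "m \<le> t" unfolding m_def by (rule Least_le) (rule st)
  have m0: "m > 0"
  proof (rule ccontr)
    assume "\<not> m > 0"
    then have "m = 0" by simp
    then show False using sm s0 r2 binomial_eq_0[of 0 r] by simp
  qed
  have sM: "(m - 1) choose r < s"
  proof -
    have "\<not> s \<le> (m - 1) choose r" unfolding m_def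
      by (rule not_less_Least) (use m0 in \<open>simp add: m_def\<close>)
    then show ?thesis by simp
  qed
  have m8: "8 * r^2 \<le> m"
  proof (rule ccontr)
    assume "\<not> 8 * r^2 \<le> m"
    then have lt: "Suc m \<le> 8 * r^2" by simp
    show False
    proof (cases "r \<le> m")
      case False
      then show ?thesis using sm s0 binomial_eq_0[of m r] by simp
    next
      case True
      have "Suc m choose r = Suc m choose Suc (r - 1)" using r2 by simp
      also have "\<dots> = (m choose (r - 1)) + (m choose Suc (r - 1))" by simp
      also have "Suc (r - 1) = r" using r2 by simp
      finally have eq: "Suc m choose r = (m choose (r - 1)) + (m choose r)" .
      have "0 < m choose (r - 1)" using True by simp
      then have "m choose r < Suc m choose r" using eq by simp
      also have "\<dots> \<le> (8 * r^2) choose r" by (rule binomial_right_mono[OF lt])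
      also have "\<dots> \<le> s" by (rule s8)
      finally show ?thesis using sm by simp
    qed
  qed
  define k where "k = (m - r) div (2 * r^2)"
  have q1: "2 * r^2 * k \<le> m - r" and q2: "k \<le> t" and q3: "s \<le> k * ((t - k) choose (r - 1))"
    using quant[OF r2 sm sM m8 mt sb k_def] by auto
  have k0: "k > 0"
  proof -
    have rsq: "r \<le> r^2" by (simp add: power2_eq_square)
    have "1 * (2 * r^2) \<le> m - r" using m8 rsq by linarith
    moreover have "0 < 2 * r^2" using r2 by simp
    ultimately have "1 \<le> (m - r) div (2 * r^2)" by (simp only: less_eq_div_iff_mult_less_eq)
    then show ?thesis unfolding k_def by simp
  qed
  define C where "C = colex_initial s r"
  define D where "D = (m - 1) choose (r - 1)"
  have Csub: "A \<subseteq> {..<m}" if "A \<in> C" for A using colex_sub[OF sm] that by (simp add: C_def)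
  have Ce: "finite e \<and> card e = r" if "e \<in> C" for e
    using that by (auto simp: C_def colex_initial_def rsets_def)
  have Cfin: "finite C" using Csub by (intro finite_subset[of C "Pow {..<m}"]) auto
  have Ccard: "card C \<le> s" unfolding C_def by (rule colex_card[OF sm])
  have Cdeg: "hdeg C x \<le> D" if "x \<in> \<Union>C" for x
  proof -
    from that obtain A where A: "A \<in> C" "x \<in> A" by auto
    have xm: "x \<in> {..<m}" using Csub[OF A(1)] A(2) by auto
    have "{e\<in>C. x \<in> e} \<subseteq> {e. e \<subseteq> {..<m} \<and> card e = r \<and> x \<in> e}" using Csub Ce by auto
    then have "card {e\<in>C. x \<in> e} \<le> card {e. e \<subseteq> {..<m} \<and> card e = r \<and> x \<in> e}"
      by (intro card_mono) (auto intro: finite_subset[of _ "Pow {..<m}"])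
    also have "\<dots> = D" unfolding D_def using deg_count[of "{..<m}" x r] xm r2 by simp
    finally show ?thesis by (simp add: hdeg_def)
  qed
  have PC: "P2 C \<le> D * (r * card C)" by (rule P2_upper[OF Cfin Ce Cdeg])
  have "(m - r) * P2 C \<le> (m - r) * D * r * s"
  proof -
    have "(m - r) * P2 C \<le> (m - r) * (D * (r * card C))" using PC by simp
    also have "\<dots> \<le> (m - r) * (D * (r * s))" using Ccard by simp
    finally show ?thesis by (simp add: mult_ac)
  qed
  also have "(m - r) * D = r * ((m - 1) choose r)" unfolding D_def using binom_id[OF m0] r2 by simp
  also have "r * ((m - 1) choose r) * r * s \<le> r * s * r * s" using sM by simp
  finally have Cb: "(m - r) * P2 C \<le> r^2 * s^2" by (simp add: power2_eq_square mult_ac)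
  have Cb2: "2 * r^2 * k * P2 C \<le> r^2 * s^2"
  proof -
    have "2 * r^2 * k * P2 C \<le> (m - r) * P2 C" using q1 by (rule mult_right_mono) simp
    also have "\<dots> \<le> r^2 * s^2" by (rule Cb)
    finally show ?thesis .
  qed
  define L where "L = lex_initial s r t"
  have Lcard: "card L = s" unfolding L_def by (rule lex_card[OF st])
  have Lsub: "L \<subseteq> rsets_of r t" by (auto simp: L_def lex_initial_def)
  have Lfin: "finite L" using Lsub rsets_of_finite finite_subset by blast
  have Le: "finite e" if "e \<in> L" for e
    using that Lsub by (auto simp: rsets_of_def intro: finite_subset)
  have Lm: "e \<inter> {1..k} \<noteq> {}" if "e \<in> L" for e
    using lex_meets[OF q3 _ q2] that r2 by (simp add: L_def)
  have PL: "real (card L)^2 \<le> real (card {1..k}) * real (P2 L)"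
    by (rule P2_lower[OF Lfin Le Lm finite_atLeastAtMost])
  then have PL2: "real s^2 \<le> real k * real (P2 L)" using Lcard by simp
  have "real (2 * r^2 * k * P2 C) \<le> real (r^2 * s^2)" using Cb2 by (simp only: of_nat_le_iff)
  moreover have "real (r^2) * (real k * (2 * real (P2 C))) = real (2 * r^2 * k * P2 C)" by simp
  moreover have "real (r^2) * real s^2 = real (r^2 * s^2)" by simp
  ultimately have "real (r^2) * (real k * (2 * real (P2 C))) \<le> real (r^2) * real s^2" by linarith
  then have "real k * (2 * real (P2 C)) \<le> real s^2" using r2 by (simp add: mult_le_cancel_left_pos)
  also have "\<dots> \<le> real k * real (P2 L)" by (rule PL2)
  finally have "2 * real (P2 C) \<le> real (P2 L)" using k0 by (simp add: mult_le_cancel_left_pos)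
  then show ?thesis by (simp add: C_def L_def)
qed

end
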